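(* For any unit types $U,V$ and any types $T,R$: if $V\to R\preceq U\to T$, then there exist unit types $\vec W=W_1,\dots,W_n$ and type variables $\vec X=X_1,\dots,X_n$ such that $U\to T\equiv(V\to R)[\vec W/\vec X]$.
   Context: Fix a commutative ring $(\mathcal S,+,\times)$. Types: $T ::= U \mid \forall X.T \mid \alpha.T \mid \overline0$; unit types: $U ::= X \mid U\to T \mid \forall X.U$ ($\alpha\in\mathcal S$, $X$ type variables). Type variables are only substituted by unit types; $T[\vec W/\vec X]$ means $T[W_1/X_1]\cdots[W_n/X_n]$ and $(\alpha.T)[U/X]=\alpha.T[U/X]$. Type equivalence $\equiv$ is the least congruence with $\alpha.\overline0\equiv\overline0$, $0.T\equiv\overline0$, $1.T\equiv T$, $\alpha.(\beta.T)\equiv(\alpha\times\beta).T$, $\forall X.\alpha.T\equiv\alpha.\forall X.T$. Write $T\prec R$ if either $R\equiv\forall X.T$ for some $X$, or $T\equiv\forall X.S$ and $R\equiv S[U/X]$ for some type $S$ and unit type $U$; $\preceq$ is the reflexive and transitive closure of $\prec$. *)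

theory Defs
  imports Main
begin

datatype 's ty =
    TVar nat
  | Arr "'s ty" "'s ty"
  | Forall nat "'s ty"
  | Scal 's "'s ty"
  | Zero

fun wf_ty :: "'s ty \<Rightarrow> bool" and unit_ty :: "'s ty \<Rightarrow> bool" where
  "wf_ty (TVar X) = True"
| "wf_ty (Arr U T) = (unit_ty U \<and> wf_ty T)"
| "wf_ty (Forall X T) = wf_ty T"
| "wf_ty (Scal a T) = wf_ty T"
| "wf_ty Zero = True"
| "unit_ty (TVar X) = True"
| "unit_ty (Arr U T) = (unit_ty U \<and> wf_ty T)"
| "unit_ty (Forall X U) = unit_ty U"
| "unit_ty (Scal a T) = False"
| "unit_ty Zero = False"

fun fv :: "'s ty \<Rightarrow> nat set" where
  "fv (TVar X) = {X}"
| "fv (Arr U T) = fv U \<union> fv T"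
| "fv (Forall X T) = fv T - {X}"
| "fv (Scal a T) = fv T"
| "fv Zero = {}"

fun vars :: "'s ty \<Rightarrow> nat set" where
  "vars (TVar X) = {X}"
| "vars (Arr U T) = vars U \<union> vars T"
| "vars (Forall X T) = insert X (vars T)"
| "vars (Scal a T) = vars T"
| "vars Zero = {}"

lemma finite_vars: "finite (vars T)"
  by (induction T) auto

lemma fv_subset_vars: "fv T \<subseteq> vars T"
  by (induction T) auto

definition fresh :: "nat set \<Rightarrow> nat" where
  "fresh S = Suc (Max (insert 0 S))"

text \<open>Renaming of free occurrences of Y by Z (capture-free whenever Z does not occur in T).\<close>
fun ren :: "nat \<Rightarrow> nat \<Rightarrow> 's ty \<Rightarrow> 's ty" where
  "ren Y Z (TVar V) = (if V = Y then TVar Z else TVar V)"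
| "ren Y Z (Arr U T) = Arr (ren Y Z U) (ren Y Z T)"
| "ren Y Z (Forall V T) = (if V = Y then Forall V T else Forall V (ren Y Z T))"
| "ren Y Z (Scal a T) = Scal a (ren Y Z T)"
| "ren Y Z Zero = Zero"

lemma size_ren[simp]: "size (ren Y Z T) = size T"
  by (induction T) auto

function subst :: "nat \<Rightarrow> 's ty \<Rightarrow> 's ty \<Rightarrow> 's ty" where
  "subst X W (TVar Y) = (if Y = X then W else TVar Y)"
| "subst X W (Arr U T) = Arr (subst X W U) (subst X W T)"
| "subst X W (Forall Y T) =
     (if Y = X then Forall Y T
      else if Y \<notin> fv W then Forall Y (subst X W T)
      else (let Z = fresh (insert X (vars W \<union> vars T))
            in Forall Z (subst X W (ren Y Z T))))"
| "subst X W (Scal a T) = Scal a (subst X W T)"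
| "subst X W Zero = Zero"
  by pat_completeness auto
termination
  by (relation "measure (\<lambda>(X, W, T). size T)") auto

fun substs :: "(nat \<times> 's ty) list \<Rightarrow> 's ty \<Rightarrow> 's ty" where
  "substs [] T = T"
| "substs ((X, W) # \<sigma>) T = substs \<sigma> (subst X W T)"

inductive ty_equiv :: "'s::comm_ring_1 ty \<Rightarrow> 's ty \<Rightarrow> bool" (infix "\<equiv>\<^sub>T" 50) where
  refl: "wf_ty T \<Longrightarrow> T \<equiv>\<^sub>T T"
| sym: "T \<equiv>\<^sub>T R \<Longrightarrow> R \<equiv>\<^sub>T T"
| trans: "T \<equiv>\<^sub>T R \<Longrightarrow> R \<equiv>\<^sub>T S \<Longrightarrow> T \<equiv>\<^sub>T S"
| cong_arr: "unit_ty U \<Longrightarrow> unit_ty U' \<Longrightarrow> U \<equiv>\<^sub>T U' \<Longrightarrow> T \<equiv>\<^sub>T T' \<Longrightarrow> Arr U T \<equiv>\<^sub>T Arr U' T'"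
| cong_all: "T \<equiv>\<^sub>T T' \<Longrightarrow> Forall X T \<equiv>\<^sub>T Forall X T'"
| cong_scal: "T \<equiv>\<^sub>T T' \<Longrightarrow> Scal a T \<equiv>\<^sub>T Scal a T'"
| scal_zero: "Scal a Zero \<equiv>\<^sub>T Zero"
| zero_scal: "wf_ty T \<Longrightarrow> Scal 0 T \<equiv>\<^sub>T Zero"
| one_scal: "wf_ty T \<Longrightarrow> Scal 1 T \<equiv>\<^sub>T T"
| scal_scal: "wf_ty T \<Longrightarrow> Scal a (Scal b T) \<equiv>\<^sub>T Scal (a * b) T"
| all_scal: "wf_ty T \<Longrightarrow> Forall X (Scal a T) \<equiv>\<^sub>T Scal a (Forall X T)"
| alpha: "wf_ty T \<Longrightarrow> Y \<notin> fv (Forall X T) \<Longrightarrow> Forall X T \<equiv>\<^sub>T Forall Y (subst X (TVar Y) T)"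

definition prec1 :: "'s::comm_ring_1 ty \<Rightarrow> 's ty \<Rightarrow> bool" where
  "prec1 T R \<longleftrightarrow>
     (\<exists>X. R \<equiv>\<^sub>T Forall X T) \<or>
     (\<exists>X S U. unit_ty U \<and> T \<equiv>\<^sub>T Forall X S \<and> R \<equiv>\<^sub>T subst X U S)"

definition preceq :: "'s::comm_ring_1 ty \<Rightarrow> 's ty \<Rightarrow> bool" where
  "preceq = prec1\<^sup>*\<^sup>*"

end

theory Submission
  imports Defs
begin

datatype 's lt = LF nat | LB nat | LArr "'s lt" "'s lt" | LAll "'s lt" | LSc 's "'s lt" | LZ

fun close :: "nat \<Rightarrow> nat \<Rightarrow> 's lt \<Rightarrow> 's lt" where
  "close k X (LF Y) = (if Y = X then LB k else LF Y)"
| "close k X (LB j) = LB j"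
| "close k X (LArr a b) = LArr (close k X a) (close k X b)"
| "close k X (LAll a) = LAll (close (Suc k) X a)"
| "close k X (LSc c a) = LSc c (close k X a)"
| "close k X LZ = LZ"

fun closedat :: "nat \<Rightarrow> 's lt \<Rightarrow> bool" where
  "closedat k (LF Y) = True"
| "closedat k (LB j) = (j < k)"
| "closedat k (LArr a b) = (closedat k a \<and> closedat k b)"
| "closedat k (LAll a) = closedat (Suc k) a"
| "closedat k (LSc c a) = closedat k a"
| "closedat k LZ = True"

fun lsubst :: "nat \<Rightarrow> 's lt \<Rightarrow> 's lt \<Rightarrow> 's lt" where
  "lsubst X w (LF Y) = (if Y = X then w else LF Y)"
| "lsubst X w (LB j) = LB j"
| "lsubst X w (LArr a b) = LArr (lsubst X w a) (lsubst X w b)"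
| "lsubst X w (LAll a) = LAll (lsubst X w a)"
| "lsubst X w (LSc c a) = LSc c (lsubst X w a)"
| "lsubst X w LZ = LZ"

fun freeL :: "'s lt \<Rightarrow> nat set" where
  "freeL (LF Y) = {Y}"
| "freeL (LB j) = {}"
| "freeL (LArr a b) = freeL a \<union> freeL b"
| "freeL (LAll a) = freeL a"
| "freeL (LSc c a) = freeL a"
| "freeL LZ = {}"

fun lall :: "nat \<Rightarrow> 's lt \<Rightarrow> 's lt" where
  "lall X (LSc c u) = LSc c (LAll (close 0 X u))"
| "lall X _ = LZ"

fun lscal :: "'s::comm_ring_1 \<Rightarrow> 's lt \<Rightarrow> 's lt" where
  "lscal a (LSc c u) = (if a * c = 0 then LZ else LSc (a * c) u)"
| "lscal a _ = LZ"

fun body :: "'s lt \<Rightarrow> 's lt" where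
  "body (LSc c u) = u"
| "body _ = LZ"

fun nf :: "'s::comm_ring_1 ty \<Rightarrow> 's lt" where
  "nf (TVar X) = LSc 1 (LF X)"
| "nf (Arr U T) = LSc 1 (LArr (body (nf U)) (nf T))"
| "nf (Forall X T) = lall X (nf T)"
| "nf (Scal a T) = lscal a (nf T)"
| "nf Zero = LZ"

lemma nf_shape: "nf T = LZ \<or> (\<exists>c u. c \<noteq> 0 \<and> nf T = LSc c u)"
proof (induction T)
  case (Forall X T) then show ?case by auto
next
  case (Scal a T) then show ?case by (auto split: if_splits)
qed auto

lemma unit_nf: "unit_ty U \<Longrightarrow> nf U = LSc 1 (body (nf U))"
proof (induction U)
  case (Forall X U)
  then have "nf U = LSc 1 (body (nf U))" by simp
  then show ?case by (metis body.simps(1) lall.simps(1) nf.simps(3))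
qed auto

lemma closedat_close: "closedat k u \<Longrightarrow> closedat (Suc k) (close k X u)"
  by (induction u arbitrary: k) auto

lemma closedat_lall: "closedat 0 t \<Longrightarrow> closedat 0 (lall X t)"
  by (cases t) (auto intro: closedat_close)
lemma closedat_lscal: "closedat 0 t \<Longrightarrow> closedat 0 (lscal a t)"
  by (cases t) auto
lemma closedat_body: "closedat 0 t \<Longrightarrow> closedat 0 (body t)"
  by (cases t) auto

lemma closedat_nf: "closedat 0 (nf T)"
  by (induction T) (auto intro: closedat_lall closedat_lscal closedat_body)

lemma freeL_close: "freeL (close k X u) = freeL u - {X}"
  by (induction u arbitrary: k) auto

lemma freeL_lall: "freeL (lall X t) \<subseteq> freeL t - {X}"
  by (cases t) (auto simp: freeL_close)
lemma freeL_lscal: "freeL (lscal a t) \<subseteq> freeL t"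
  by (cases t) auto
lemma freeL_body: "freeL (body t) \<subseteq> freeL t"
  by (cases t) auto

lemma freeL_nf: "freeL (nf T) \<subseteq> fv T"
proof (induction T)
  case (Arr U T) then show ?case using freeL_body[of "nf U"] by auto
next
  case (Forall X T) then show ?case using freeL_lall[of X "nf T"] by auto
next
  case (Scal a T) then show ?case using freeL_lscal[of a "nf T"] by auto
qed auto

lemma lsubst_notin: "X \<notin> freeL t \<Longrightarrow> lsubst X w t = t"
  by (induction t) auto

lemma close_notin: "Y \<notin> freeL t \<Longrightarrow> close k Y t = t"
  by (induction t arbitrary: k) auto

lemma close_lsubst_comm: "Y \<noteq> X \<Longrightarrow> Y \<notin> freeL w \<Longrightarrow>
    close k Y (lsubst X w t) = lsubst X w (close k Y t)"
  by (induction t arbitrary: k) (auto simp: close_notin)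

lemma close_rename: "Y \<notin> freeL u \<or> Y = X \<Longrightarrow> close k Y (lsubst X (LF Y) u) = close k X u"
  by (induction u arbitrary: k) auto

lemma close_inj_lsubst: "closedat k u \<Longrightarrow> closedat k u' \<Longrightarrow> close k X u = close k Y u' \<Longrightarrow>
    lsubst X w u = lsubst Y w u'"
proof (induction u arbitrary: k u')
  case (LF Z) then show ?case by (cases u') (auto split: if_splits)
next
  case (LB j) then show ?case by (cases u') (auto split: if_splits)
next
  case (LArr a b) then show ?case by (cases u') (auto split: if_splits)
next
  case (LAll a) then show ?case by (cases u') (auto split: if_splits)
next
  case (LSc c a) then show ?case by (cases u') (auto split: if_splits)
next
  case LZ then show ?case by (cases u') (auto split: if_splits)
qed

lemma lsubst_lall_same: "lsubst X w (lall X t) = lall X t"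
  by (rule lsubst_notin) (use freeL_lall[of X t] in auto)

definition shp :: "'s lt \<Rightarrow> bool" where "shp t \<longleftrightarrow> t = LZ \<or> (\<exists>c u. t = LSc c u)"

lemma shp_nf: "shp (nf T)" using nf_shape[of T] unfolding shp_def by auto

lemma lsubst_lall: "shp t \<Longrightarrow> Y \<noteq> X \<Longrightarrow> Y \<notin> freeL w \<Longrightarrow> lsubst X w (lall Y t) = lall Y (lsubst X w t)"
  unfolding shp_def by (auto simp: close_lsubst_comm)

lemma lsubst_lscal: "shp t \<Longrightarrow> lsubst X w (lscal a t) = lscal a (lsubst X w t)"
  unfolding shp_def by auto

lemma lsubst_body: "t = LZ \<or> (\<exists>c u. t = LSc c u) \<Longrightarrow> body (lsubst X w t) = lsubst X w (body t)"
  by auto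

lemma lall_rename: "Y \<notin> freeL t \<or> Y = X \<Longrightarrow> lall Y (lsubst X (LF Y) t) = lall X t"
  by (cases t) (auto simp: close_rename)

lemma nf_ren: "Z \<notin> vars T \<Longrightarrow> nf (ren Y Z T) = lsubst Y (LF Z) (nf T)"
proof (induction T)
  case (Arr U T)
  then show ?case using lsubst_body[of "nf U" Y "LF Z"] nf_shape[of U] by auto
next
  case (Forall V T)
  then show ?case by (auto simp: lsubst_lall_same lsubst_lall shp_nf)
next
  case (Scal a T) then show ?case by (auto simp: lsubst_lscal shp_nf)
qed auto

lemma finite_fresh: "finite S \<Longrightarrow> fresh S \<notin> S"
proof
  assume fin: "finite S" and "fresh S \<in> S"
  then have "fresh S \<le> Max (insert 0 S)" by (intro Max_ge) auto
  then show False unfolding fresh_def by simp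
qed

lemma fresh_notin: "finite S \<Longrightarrow> x \<in> S \<Longrightarrow> fresh S \<noteq> x"
  using finite_fresh by blast

lemma nf_subst: "unit_ty W \<Longrightarrow> nf (subst X W T) = lsubst X (body (nf W)) (nf T)"
proof (induction X W T rule: subst.induct)
  case (1 X W Y)
  then show ?case using unit_nf[of W] by auto
next
  case (2 X W U T)
  then show ?case using lsubst_body[of "nf U" X "body (nf W)"] nf_shape[of U] by auto
next
  case (3 X W Y T)
  let ?w = "body (nf W)"
  have fw: "freeL ?w \<subseteq> vars W" using freeL_body[of "nf W"] freeL_nf[of W] fv_subset_vars[of W] by auto
  have ft: "freeL (nf T) \<subseteq> vars T" using freeL_nf[of T] fv_subset_vars[of T] by auto
  show ?case
  proof (cases "Y = X")
    case True then show ?thesis by (simp add: lsubst_lall_same)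
  next
    case ne: False
    show ?thesis
    proof (cases "Y \<in> fv W")
      case False
      have "Y \<notin> freeL ?w" using False freeL_body[of "nf W"] freeL_nf[of W] by auto
      then show ?thesis using False ne 3 by (simp add: lsubst_lall shp_nf)
    next
      case True
      define Z where "Z = fresh (insert X (vars W \<union> vars T))"
      have fin: "finite (insert X (vars W \<union> vars T))" by (simp add: finite_vars)
      have Z: "Z \<noteq> X" "Z \<notin> vars W" "Z \<notin> vars T"
        using finite_fresh[OF fin] unfolding Z_def by auto
      have IH: "nf (subst X W (ren Y Z T)) = lsubst X ?w (nf (ren Y Z T))"
        using 3(2)[OF ne _ Z_def] True 3(3) by simp
      have "nf (subst X W (Forall Y T)) = lall Z (nf (subst X W (ren Y Z T)))"
        using ne True by (simp add: Z_def[symmetric] Let_def)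
      also have "\<dots> = lall Z (lsubst X ?w (lsubst Y (LF Z) (nf T)))"
        using IH nf_ren[OF Z(3)] by simp
      also have "\<dots> = lsubst X ?w (lall Z (lsubst Y (LF Z) (nf T)))"
        proof (rule lsubst_lall[symmetric])
        show "shp (lsubst Y (LF Z) (nf T))" using shp_nf[of T] by (auto simp: shp_def)
      qed (use Z fw in auto)
      also have "\<dots> = lsubst X ?w (lall Y (nf T))"
        using Z ft by (subst lall_rename) auto
      finally show ?thesis by simp
    qed
  qed
next
  case (4 X W a T) then show ?case by (simp add: lsubst_lscal shp_nf)
qed auto

lemma unit_wf: "unit_ty T \<Longrightarrow> wf_ty T"
  by (induction T) auto

lemma ren_wf: "(wf_ty T \<longrightarrow> wf_ty (ren Y Z T)) \<and> (unit_ty T \<longrightarrow> unit_ty (ren Y Z T))"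
  by (induction T) auto

lemma subst_wf: "unit_ty W \<Longrightarrow> (wf_ty T \<longrightarrow> wf_ty (subst X W T)) \<and> (unit_ty T \<longrightarrow> unit_ty (subst X W T))"
proof (induction X W T rule: subst.induct)
  case (3 X W Y T)
  then show ?case using ren_wf[of T Y] by (auto simp: Let_def)
qed (auto simp: unit_wf)

lemma equiv_wf: "T \<equiv>\<^sub>T T' \<Longrightarrow> wf_ty T \<and> wf_ty T'"
proof (induction rule: ty_equiv.induct)
  case alpha
  then show ?case by (simp add: subst_wf[THEN conjunct1, rule_format])
qed (simp_all add: unit_wf)

lemma lscal_one: "lscal 1 (nf T) = nf T"
  using nf_shape[of T] by auto

lemma lscal_zero: "lscal 0 t = LZ"
  by (cases t) auto

lemma lscal_lscal: "lscal a (lscal b t) = lscal (a * b) t"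
  by (cases t) (auto simp: mult.assoc)

lemma lall_lscal: "lall X (lscal a t) = lscal a (lall X t)"
  by (cases t) auto

lemma nf_alpha: "Y \<notin> fv (Forall X T) \<Longrightarrow> nf (Forall X T) = nf (Forall Y (subst X (TVar Y) T))"
proof -
  assume a: "Y \<notin> fv (Forall X T)"
  have "nf (subst X (TVar Y) T) = lsubst X (LF Y) (nf T)"
    using nf_subst[of "TVar Y" X T] by simp
  moreover have "Y \<notin> freeL (nf T) \<or> Y = X" using a freeL_nf[of T] by auto
  ultimately show ?thesis by (simp add: lall_rename)
qed

lemma sound: "T \<equiv>\<^sub>T T' \<Longrightarrow> nf T = nf T'"
proof (induction rule: ty_equiv.induct)
  case alpha then show ?case by (intro nf_alpha) simp
next
  case (one_scal T) then show ?case by (simp add: lscal_one)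
next
  case (zero_scal T) then show ?case by (simp add: lscal_zero)
next
  case (scal_scal T a b) then show ?case by (simp add: lscal_lscal)
next
  case (all_scal T X a) then show ?case by (simp add: lall_lscal)
qed simp_all

lemmas eqtrans[trans] = ty_equiv.trans

lemma forall_zero: "Forall X Zero \<equiv>\<^sub>T Zero"
proof -
  have "Forall X Zero \<equiv>\<^sub>T Forall X (Scal 0 Zero)"
    by (rule ty_equiv.cong_all, rule ty_equiv.sym, rule ty_equiv.zero_scal) simp
  also have "Forall X (Scal 0 Zero) \<equiv>\<^sub>T Scal 0 (Forall X Zero)"
    by (intro ty_equiv.all_scal) simp
  also have "Scal 0 (Forall X Zero) \<equiv>\<^sub>T Zero"
    by (intro ty_equiv.zero_scal) simp
  finally show ?thesis .
qed


lemma norm_unit: "unit_ty T \<Longrightarrow> (nf T = LZ \<longrightarrow> T \<equiv>\<^sub>T Zero) \<and>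
   (\<forall>c u. nf T = LSc c u \<longrightarrow> (\<exists>T0. unit_ty T0 \<and> nf T0 = LSc 1 u \<and> size T0 \<le> size T \<and> T \<equiv>\<^sub>T Scal c T0))"
proof (intro conjI allI impI)
  assume u: "unit_ty T"
  then have n: "nf T = LSc 1 (body (nf T))" by (rule unit_nf)
  show "nf T = LZ \<Longrightarrow> T \<equiv>\<^sub>T Zero" using n by simp
  fix c u assume "nf T = LSc c u"
  then have cu: "c = 1" "u = body (nf T)" using n by auto
  have "T \<equiv>\<^sub>T Scal 1 T" by (rule ty_equiv.sym, rule ty_equiv.one_scal, rule unit_wf, rule u)
  then show "\<exists>T0. unit_ty T0 \<and> nf T0 = LSc 1 u \<and> size T0 \<le> size T \<and> T \<equiv>\<^sub>T Scal c T0"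
    using u n cu by (intro exI[of _ T]) simp
qed

lemma norm: "wf_ty T \<Longrightarrow> (nf T = LZ \<longrightarrow> T \<equiv>\<^sub>T Zero) \<and>
   (\<forall>c u. nf T = LSc c u \<longrightarrow> (\<exists>T0. unit_ty T0 \<and> nf T0 = LSc 1 u \<and> size T0 \<le> size T \<and> T \<equiv>\<^sub>T Scal c T0))"
proof (induction T)
  case (TVar X)
  have "TVar X \<equiv>\<^sub>T Scal 1 (TVar X)" by (rule ty_equiv.sym, rule ty_equiv.one_scal) simp
  then show ?case using norm_unit[of "TVar X"] by simp
next
  case (Arr U T)
  show ?case using Arr.prems norm_unit[of "Arr U T"] by simp
next
  case (Forall X T)
  have wT: "wf_ty T" using Forall.prems by simp
  note IH = Forall.IH[OF wT]
  show ?case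
  proof (cases "nf T = LZ")
    case True
    then have "T \<equiv>\<^sub>T Zero" using IH by simp
    then have "Forall X T \<equiv>\<^sub>T Forall X Zero" by (rule ty_equiv.cong_all)
    also have "\<dots> \<equiv>\<^sub>T Zero" by (rule forall_zero)
    finally show ?thesis using True by simp
  next
    case False
    then obtain c' u' where cu: "nf T = LSc c' u'" using nf_shape[of T] by auto
    then obtain T0 where T0: "unit_ty T0" "nf T0 = LSc 1 u'" "size T0 \<le> size T" "T \<equiv>\<^sub>T Scal c' T0"
      using IH by blast
    have "Forall X T \<equiv>\<^sub>T Forall X (Scal c' T0)" using T0(4) by (rule ty_equiv.cong_all)
    also have "\<dots> \<equiv>\<^sub>T Scal c' (Forall X T0)" using T0(1) by (intro ty_equiv.all_scal unit_wf)
    finally have e: "Forall X T \<equiv>\<^sub>T Scal c' (Forall X T0)" .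
    show ?thesis
    proof (intro conjI allI impI)
      show "nf (Forall X T) = LZ \<Longrightarrow> Forall X T \<equiv>\<^sub>T Zero" using cu by simp
      fix c u assume "nf (Forall X T) = LSc c u"
      then have "c = c'" "u = LAll (close 0 X u')" using cu by auto
      then show "\<exists>T0. unit_ty T0 \<and> nf T0 = LSc 1 u \<and> size T0 \<le> size (Forall X T) \<and> Forall X T \<equiv>\<^sub>T Scal c T0"
        using e T0 by (intro exI[of _ "Forall X T0"]) simp
    qed
  qed
next
  case (Scal a T)
  have wT: "wf_ty T" using Scal.prems by simp
  note IH = Scal.IH[OF wT]
  show ?case
  proof (cases "nf T = LZ")
    case True
    then have "T \<equiv>\<^sub>T Zero" using IH by simp
    then have "Scal a T \<equiv>\<^sub>T Scal a Zero" by (rule ty_equiv.cong_scal)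
    also have "\<dots> \<equiv>\<^sub>T Zero" by (rule ty_equiv.scal_zero)
    finally show ?thesis using True by simp
  next
    case False
    then obtain c' u' where cu: "nf T = LSc c' u'" using nf_shape[of T] by auto
    then obtain T0 where T0: "unit_ty T0" "nf T0 = LSc 1 u'" "size T0 \<le> size T" "T \<equiv>\<^sub>T Scal c' T0"
      using IH by blast
    have "Scal a T \<equiv>\<^sub>T Scal a (Scal c' T0)" using T0(4) by (rule ty_equiv.cong_scal)
    also have "\<dots> \<equiv>\<^sub>T Scal (a * c') T0" using T0(1) by (intro ty_equiv.scal_scal unit_wf)
    finally have e: "Scal a T \<equiv>\<^sub>T Scal (a * c') T0" .
    show ?thesis
    proof (cases "a * c' = 0")
      case True
      have "Scal (a * c') T0 \<equiv>\<^sub>T Zero" unfolding True using T0(1) by (intro ty_equiv.zero_scal unit_wf)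
      with e have "Scal a T \<equiv>\<^sub>T Zero" by (rule ty_equiv.trans)
      then show ?thesis using True cu by simp
    next
      case False
      then show ?thesis using cu e T0 by (intro conjI allI impI) (auto intro!: exI[of _ T0])
    qed
  qed
next
  case Zero
  then show ?case by (simp add: ty_equiv.refl)
qed

lemma size_subst_var0: "W = TVar Y \<Longrightarrow> size (subst X W T) = size T"
  by (induction X W T rule: subst.induct) (auto simp: Let_def)

lemma size_subst_var: "size (subst X (TVar Y) T) = size T"
  by (rule size_subst_var0) simp

lemma lall_unit: "unit_ty S \<Longrightarrow> lall X (nf S) = LSc 1 (LAll (close 0 X (body (nf S))))"
  using unit_nf[of S] by (metis lall.simps(1))

lemma nf_unit_forall: "unit_ty S \<Longrightarrow> nf (Forall X S) = LSc 1 (LAll (close 0 X (body (nf S))))"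
  using unit_nf[of S] by (metis lall.simps(1) nf.simps(3))

lemma complete_aux: "size A + size B \<le> n \<Longrightarrow> wf_ty A \<Longrightarrow> wf_ty B \<Longrightarrow> nf A = nf B \<Longrightarrow> A \<equiv>\<^sub>T B"
proof (induction n arbitrary: A B rule: less_induct)
  case (less n)
  have IH: "A \<equiv>\<^sub>T B" if "size A + size B < n" "wf_ty A" "wf_ty B" "nf A = nf B" for A B :: "'a ty"
    using less.IH[of "size A + size B" A B] that by simp
  have U: "A \<equiv>\<^sub>T B" if sz: "size A + size B \<le> n" and uA: "unit_ty A" and uB: "unit_ty B" and e: "nf A = nf B" for A B :: "'a ty"
  proof (cases A)
    case (TVar X)
    then show ?thesis using uB e by (cases B) (auto intro: ty_equiv.refl simp: nf_unit_forall lall_unit)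
  next
    case (Arr U1 T1)
    then show ?thesis
    proof (cases B)
      case (Arr U2 T2)
      have uu: "unit_ty U1" "unit_ty U2" "wf_ty T1" "wf_ty T2" using uA uB Arr \<open>A = Arr U1 T1\<close> by auto
      have "nf U1 = nf U2" using e Arr \<open>A = Arr U1 T1\<close> unit_nf[OF uu(1)] unit_nf[OF uu(2)] by simp
      then have "U1 \<equiv>\<^sub>T U2" using sz Arr \<open>A = Arr U1 T1\<close> uu unit_wf by (intro IH) auto
      moreover have "T1 \<equiv>\<^sub>T T2" using sz Arr \<open>A = Arr U1 T1\<close> uu e by (intro IH) auto
      ultimately show ?thesis using Arr \<open>A = Arr U1 T1\<close> uu by (simp add: ty_equiv.cong_arr)
    qed (use e uB \<open>A = Arr U1 T1\<close> in \<open>auto simp: lall_unit\<close>)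
  next
    case (Forall X S)
    then show ?thesis
    proof (cases B)
      case (Forall Y S')
      have uS: "unit_ty S" "unit_ty S'" using uA uB Forall \<open>A = Forall X S\<close> by auto
      define s where "s = body (nf S)"
      define s' where "s' = body (nf S')"
      have ns: "nf S = LSc 1 s" "nf S' = LSc 1 s'" using unit_nf uS s_def s'_def by auto
      have cl: "close 0 X s = close 0 Y s'"
        using e Forall \<open>A = Forall X S\<close> nf_unit_forall[OF uS(1)] nf_unit_forall[OF uS(2)] s_def s'_def by simp
      have cd: "closedat 0 s" "closedat 0 s'" using closedat_nf[of S] closedat_nf[of S'] ns by auto
      define Z where "Z = fresh (vars S \<union> vars S')"
      have Z: "Z \<notin> vars S" "Z \<notin> vars S'" using finite_fresh[of "vars S \<union> vars S'"] finite_vars unfolding Z_def by auto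
      have Zf: "Z \<notin> fv S" "Z \<notin> fv S'" using Z fv_subset_vars by auto
      have a1: "Forall X S \<equiv>\<^sub>T Forall Z (subst X (TVar Z) S)"
        using Zf uS unit_wf by (intro ty_equiv.alpha) auto
      have a2: "Forall Y S' \<equiv>\<^sub>T Forall Z (subst Y (TVar Z) S')"
        using Zf uS unit_wf by (intro ty_equiv.alpha) auto
      have "nf (subst X (TVar Z) S) = nf (subst Y (TVar Z) S')"
        using nf_subst[of "TVar Z" X S] nf_subst[of "TVar Z" Y S'] ns close_inj_lsubst[OF cd cl] by simp
      moreover have "wf_ty (subst X (TVar Z) S)" "wf_ty (subst Y (TVar Z) S')"
        using uS by (simp_all add: unit_wf subst_wf[THEN conjunct1, rule_format])
      moreover have "size (subst X (TVar Z) S) + size (subst Y (TVar Z) S') < n"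
        using sz Forall \<open>A = Forall X S\<close> by (simp add: size_subst_var)
      ultimately have "subst X (TVar Z) S \<equiv>\<^sub>T subst Y (TVar Z) S'" using IH by blast
      then have "Forall Z (subst X (TVar Z) S) \<equiv>\<^sub>T Forall Z (subst Y (TVar Z) S')" by (rule ty_equiv.cong_all)
      then show ?thesis using a1 a2 Forall \<open>A = Forall X S\<close>
        by (meson ty_equiv.sym ty_equiv.trans)
    qed (use e uB uA \<open>A = Forall X S\<close> in \<open>auto simp: lall_unit\<close>)
  qed (use uA in auto)
  show ?case
  proof (cases "nf A = LZ")
    case True
    then have "A \<equiv>\<^sub>T Zero" "B \<equiv>\<^sub>T Zero" using norm less.prems by auto
    then show ?thesis by (meson ty_equiv.sym ty_equiv.trans)
  next
    case False
    then obtain c u where cu: "nf A = LSc c u" using nf_shape[of A] by auto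
    obtain A0 where A0: "unit_ty A0" "nf A0 = LSc 1 u" "size A0 \<le> size A" "A \<equiv>\<^sub>T Scal c A0"
      using norm[OF less.prems(2)] cu by blast
    obtain B0 where B0: "unit_ty B0" "nf B0 = LSc 1 u" "size B0 \<le> size B" "B \<equiv>\<^sub>T Scal c B0"
      using norm[OF less.prems(3)] cu less.prems(4) by metis
    have "A0 \<equiv>\<^sub>T B0" using U A0 B0 less.prems(1) by simp
    then have "Scal c A0 \<equiv>\<^sub>T Scal c B0" by (rule ty_equiv.cong_scal)
    then show ?thesis using A0(4) B0(4) by (meson ty_equiv.sym ty_equiv.trans)
  qed
qed

lemma complete: "wf_ty A \<Longrightarrow> wf_ty B \<Longrightarrow> nf A = nf B \<Longrightarrow> A \<equiv>\<^sub>T B"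
  using complete_aux by blast

fun Foralls :: "nat list \<Rightarrow> 's ty \<Rightarrow> 's ty" where
  "Foralls [] T = T"
| "Foralls (Y # Ys) T = Forall Y (Foralls Ys T)"

lemma substs_append: "substs (a @ b) T = substs b (substs a T)"
  by (induction a arbitrary: T) auto

lemma substs_Arr: "substs \<sigma> (Arr A B) = Arr (substs \<sigma> A) (substs \<sigma> B)"
  by (induction \<sigma> arbitrary: A B) auto

lemma ren_subst: "Z \<notin> vars E \<Longrightarrow> ren Y Z E = subst Y (TVar Z) E"
  by (induction E) auto

lemma subst_Foralls_aux: "length Ys = n \<Longrightarrow> unit_ty W \<Longrightarrow> \<exists>Ys' \<tau>. length Ys' = n \<and> (\<forall>(X, W) \<in> set \<tau>. unit_ty W) \<and>
    subst X W (Foralls Ys D) = Foralls Ys' (substs \<tau> D)"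
proof (induction n arbitrary: Ys X W D)
  case 0
  then show ?case by (intro exI[of _ "[]"] exI[of _ "[(X, W)]"]) simp
next
  case (Suc n)
  then obtain Z rest where Ys: "Ys = Z # rest" and lr: "length rest = n" by (cases Ys) auto
  show ?case
  proof (cases "Z = X")
    case True
    then show ?thesis using Ys lr by (intro exI[of _ "Z # rest"] exI[of _ "[]"]) simp
  next
    case ne: False
    show ?thesis
    proof (cases "Z \<in> fv W")
      case False
      obtain Ys' \<tau> where h: "length Ys' = n" "\<forall>(X, W) \<in> set \<tau>. unit_ty W" "subst X W (Foralls rest D) = Foralls Ys' (substs \<tau> D)"
        using Suc.IH[OF lr Suc.prems(2)] by blast
      show ?thesis using ne False h Ys by (intro exI[of _ "Z # Ys'"] exI[of _ \<tau>]) simp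
    next
      case True
      define Z' where "Z' = fresh (insert X (vars W \<union> vars (Foralls rest D)))"
      have fin: "finite (insert X (vars W \<union> vars (Foralls rest D)))" by (simp add: finite_vars)
      have Z': "Z' \<notin> vars (Foralls rest D)" using finite_fresh[OF fin] unfolding Z'_def by auto
      obtain r1 \<tau>1 where h1: "length r1 = n" "\<forall>(X, W) \<in> set \<tau>1. unit_ty W"
          "subst Z (TVar Z') (Foralls rest D) = Foralls r1 (substs \<tau>1 D)"
        using Suc.IH[OF lr, of "TVar Z'" Z D] by auto
      obtain r2 \<tau>2 where h2: "length r2 = n" "\<forall>(X, W) \<in> set \<tau>2. unit_ty W"
          "subst X W (Foralls r1 (substs \<tau>1 D)) = Foralls r2 (substs \<tau>2 (substs \<tau>1 D))"
        using Suc.IH[OF h1(1) Suc.prems(2), of X "substs \<tau>1 D"] by auto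
      have "subst X W (Foralls (Z # rest) D) = Forall Z' (subst X W (ren Z Z' (Foralls rest D)))"
        using ne True by (simp add: Z'_def[symmetric] Let_def)
      also have "\<dots> = Foralls (Z' # r2) (substs (\<tau>1 @ \<tau>2) D)"
        using ren_subst[OF Z'] h1 h2 by (simp add: substs_append)
      finally show ?thesis using h1 h2 Ys by (intro exI[of _ "Z' # r2"] exI[of _ "\<tau>1 @ \<tau>2"]) auto
    qed
  qed
qed

lemma subst_Foralls: "unit_ty W \<Longrightarrow> \<exists>Ys' \<tau>. (\<forall>(X, W) \<in> set \<tau>. unit_ty W) \<and>
    subst X W (Foralls Ys D) = Foralls Ys' (substs \<tau> D)"
  using subst_Foralls_aux[OF HOL.refl] by blast

lemma lall_not_arr: "lall X t \<noteq> LSc c (LArr a b)"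
  by (cases t) auto

lemma lall_lsubst_eq: "shp s \<Longrightarrow> shp s' \<Longrightarrow> closedat 0 s \<Longrightarrow> closedat 0 s' \<Longrightarrow>
    lall X s = lall Y s' \<Longrightarrow> lsubst X w s = lsubst Y w s'"
  unfolding shp_def by (auto intro: close_inj_lsubst)

lemma inst_equiv:
  assumes "Forall X S \<equiv>\<^sub>T Forall Y C" "unit_ty W"
  shows "subst X W S \<equiv>\<^sub>T subst Y W C"
proof (rule complete)
  have w: "wf_ty S" "wf_ty C" using equiv_wf[OF assms(1)] by auto
  then show "wf_ty (subst X W S)" "wf_ty (subst Y W C)"
    using assms(2) by (simp_all add: subst_wf[THEN conjunct1, rule_format])
  have "lall X (nf S) = lall Y (nf C)" using sound[OF assms(1)] by simp
  then have "lsubst X (body (nf W)) (nf S) = lsubst Y (body (nf W)) (nf C)"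
    by (intro lall_lsubst_eq) (auto simp: shp_nf closedat_nf)
  then show "nf (subst X W S) = nf (subst Y W C)"
    using assms(2) by (simp add: nf_subst)
qed

lemma invariant:
  fixes V R :: "'s::comm_ring_1 ty"
  assumes "prec1\<^sup>*\<^sup>* (Arr V R) A" "wf_ty (Arr V R)"
  shows "\<exists>Ys \<sigma>. (\<forall>(X, W) \<in> set \<sigma>. unit_ty W) \<and> A \<equiv>\<^sub>T Foralls Ys (substs \<sigma> (Arr V R))"
  using assms(1)
proof (induction rule: rtranclp_induct)
  case base
  show ?case using assms(2) by (intro exI[of _ "[]"] exI[of _ "[]"]) (simp add: ty_equiv.refl)
next
  case (step A A')
  obtain Ys \<sigma> where h: "\<forall>(X, W) \<in> set \<sigma>. unit_ty W" "A \<equiv>\<^sub>T Foralls Ys (substs \<sigma> (Arr V R))"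
    using step.IH by blast
  from step.hyps(2) show ?case unfolding prec1_def
  proof (elim disjE exE conjE)
    fix X assume a: "A' \<equiv>\<^sub>T Forall X A"
    have "A' \<equiv>\<^sub>T Forall X (Foralls Ys (substs \<sigma> (Arr V R)))"
      using a ty_equiv.cong_all[OF h(2)] by (rule ty_equiv.trans)
    then show ?thesis using h(1) by (intro exI[of _ "X # Ys"] exI[of _ \<sigma>]) simp
  next
    fix X S W assume u: "unit_ty W" and a1: "A \<equiv>\<^sub>T Forall X S" and a2: "A' \<equiv>\<^sub>T subst X W S"
    have e: "Forall X S \<equiv>\<^sub>T Foralls Ys (substs \<sigma> (Arr V R))"
      using ty_equiv.sym[OF a1] h(2) by (rule ty_equiv.trans)
    show ?thesis
    proof (cases Ys)
      case Nil
      then have "nf (Forall X S) = nf (substs \<sigma> (Arr V R))" using sound[OF e] by simp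
      then show ?thesis by (simp add: substs_Arr lall_not_arr)
    next
      case (Cons Y Ys')
      then have "subst X W S \<equiv>\<^sub>T subst Y W (Foralls Ys' (substs \<sigma> (Arr V R)))"
        using inst_equiv[OF _ u] e by simp
      moreover obtain Ys'' \<tau> where t: "\<forall>(X, W) \<in> set \<tau>. unit_ty W"
        "subst Y W (Foralls Ys' (substs \<sigma> (Arr V R))) = Foralls Ys'' (substs \<tau> (substs \<sigma> (Arr V R)))"
        using subst_Foralls[OF u] by blast
      ultimately have "A' \<equiv>\<^sub>T Foralls Ys'' (substs (\<sigma> @ \<tau>) (Arr V R))"
        using a2 by (metis substs_append ty_equiv.trans)
      then show ?thesis using h(1) t(1) by (intro exI[of _ Ys''] exI[of _ "\<sigma> @ \<tau>"]) auto
    qed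
  qed
qed

theorem mainTheorem16:
  fixes U V T R :: "'s::comm_ring_1 ty"
  assumes "unit_ty U" and "unit_ty V" and "wf_ty T" and "wf_ty R"
    and "preceq (Arr V R) (Arr U T)"
  shows "\<exists>\<sigma> :: (nat \<times> 's ty) list. (\<forall>(X, W) \<in> set \<sigma>. unit_ty W) \<and>
           Arr U T \<equiv>\<^sub>T substs \<sigma> (Arr V R)"
proof -
  obtain Ys \<sigma> where h: "\<forall>(X, W) \<in> set \<sigma>. unit_ty W" "Arr U T \<equiv>\<^sub>T Foralls Ys (substs \<sigma> (Arr V R))"
    using invariant[of V R "Arr U T"] assms unfolding preceq_def by auto
  have "Ys = []"
  proof (rule ccontr)
    assume "Ys \<noteq> []"
    then obtain Y Ys' where "Ys = Y # Ys'" by (cases Ys) auto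
    then show False using sound[OF h(2)] by (simp add: lall_not_arr[symmetric])
  qed
  then show ?thesis using h by auto
qed

end
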